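(* Let $v_1,v_2,v_3$ be positive integers with $\gcd(v_1,v_2,v_3)=1$, and suppose that no two of these speeds have a common factor greater than $2$ (i.e. $\gcd(v_i,v_j)\le 2$ for $i\ne j$). Let $r=\left\lfloor\frac{v_1+v_2}{3}\right\rfloor$, and let $L=\max_{m\in\mathbb{Z}}\min_{1\le i\le 3}\left\Vert \frac{m}{v_1+v_2}v_i\right\Vert$ be the maximum loneliness achieved at a time of the form $t=\frac{m}{v_1+v_2}$ with $m\in\mathbb{Z}$. Then: if $v_3$ is a multiple of $v_1+v_2$, then $L=0$; and if $v_3$ is not a multiple of $v_1+v_2$, then $L\ge\frac{r}{v_1+v_2}$.
   Context: For a real number $x$, $\Vert x\Vert$ denotes the distance from $x$ to the nearest integer. *)

theory Defs
  imports Complex_Main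
begin

definition dist_nint :: "real \<Rightarrow> real" where
  "dist_nint x = min (x - of_int \<lfloor>x\<rfloor>) (of_int \<lceil>x\<rceil> - x)"

definition loneliness3 :: "nat \<Rightarrow> nat \<Rightarrow> nat \<Rightarrow> real \<Rightarrow> real" where
  "loneliness3 v1 v2 v3 t =
     min (dist_nint (t * real v1)) (min (dist_nint (t * real v2)) (dist_nint (t * real v3)))"

end

theory Submission
  imports Defs
begin

lemma sym_I:
  fixes n r a :: int
  assumes "n > 0" "r \<le> a mod n" "a mod n \<le> n - r"
  shows "r \<le> (-a) mod n \<and> (-a) mod n \<le> n - r"
  using assms by (auto simp: zmod_zminus1_eq_if)

lemma caseA:
  fixes n c r :: int
  assumes r: "r = n div 3" and r1: "1 \<le> r" and c1: "1 \<le> c" and cA: "c \<le> n - 2*r + 1"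
  shows "\<exists>x. r \<le> x \<and> x \<le> n - r \<and> r \<le> (c*x) mod n \<and> (c*x) mod n \<le> n - r"
proof -
  have n3: "3*r \<le> n" using r by simp
  have npos: "n > 0" using n3 r1 by simp
  define \<rho> where "\<rho> = (c*r) mod n"
  have \<rho>0: "0 \<le> \<rho>" "\<rho> < n" using npos by (simp_all add: \<rho>_def)
  have \<rho>eq: "c*r = n * ((c*r) div n) + \<rho>" by (simp add: \<rho>_def)
  show ?thesis
  proof (cases "r \<le> \<rho> \<and> \<rho> \<le> n - r")
    case True
    then show ?thesis using n3 r1 by (intro exI[of _ r]) (simp add: \<rho>_def)
  next
    case False
    have c2: "c \<ge> 2"
    proof (rule ccontr)
      assume "\<not> c \<ge> 2"
      then have "c = 1" using c1 by simp
      then have "\<rho> = r" using npos n3 r1 by (simp add: \<rho>_def)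
      then show False using False n3 r1 by simp
    qed
    define \<delta> where "\<delta> = (if \<rho> < r then r - \<rho> else n + r - \<rho>)"
    have \<delta>b: "1 \<le> \<delta>" "\<delta> \<le> 2*r - 1" using False \<rho>0 by (auto simp: \<delta>_def)
    have \<rho>\<delta>: "\<rho> + \<delta> = r \<or> \<rho> + \<delta> = n + r" by (auto simp: \<delta>_def)
    define k where "k = (\<delta> + c - 1) div c"
    define m where "m = (\<delta> + c - 1) mod c"
    have km: "\<delta> + c - 1 = c*k + m" "0 \<le> m" "m < c" using c1
      by (simp_all add: k_def m_def)
    have ck1: "\<delta> \<le> c*k" "c*k \<le> \<delta> + c - 1" using km by linarith+
    have "c*k < c*(r+1)"
    proof -
      have "c*k \<le> 2*r - 1 + c - 1" using ck1 \<delta>b by linarith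
      also have "\<dots> < c*r + c"
      proof -
        have "2*r \<le> c*r" using c2 r1 by (intro mult_right_mono) auto
        then show ?thesis by linarith
      qed
      finally show ?thesis by (simp add: algebra_simps)
    qed
    then have kr: "k \<le> r" using c1 by (simp add: mult_less_cancel_left_pos)
    have "0 < c*k" using ck1 \<delta>b by linarith
    then have k0: "0 \<le> k" using c1 by (simp add: zero_less_mult_iff)
    define q where "q = (c*r) div n + (if \<rho> < r then 0 else 1)"
    have cx: "c*(r+k) = n*q + (r + (c*k - \<delta>))"
      using \<rho>eq by (auto simp: q_def \<delta>_def algebra_simps)
    have "(c*(r+k)) mod n = r + (c*k - \<delta>)"
      unfolding cx using ck1 cA r1 npos by (simp add: mod_pos_pos_trivial)
    then show ?thesis using ck1 cA kr k0 n3
      by (intro exI[of _ "r+k"]) auto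
  qed
qed

lemma caseB:
  fixes n c r :: int
  assumes r: "r = n div 3" and r1: "1 \<le> r" and cB: "n - 2*r + 2 \<le> c" and c2: "2*c < n"
  shows "\<exists>x. r \<le> x \<and> x \<le> n - r \<and> r \<le> (c*x) mod n \<and> (c*x) mod n \<le> n - r"
proof (rule ccontr)
  assume bad0: "\<not> ?thesis"
  define w where "w x = (c*x) mod n" for x
  have bad: "w x < r \<or> w x > n - r" if "r \<le> x" "x \<le> n - r" for x
    using bad0 that unfolding w_def by force
  have n3: "3*r \<le> n" using r by simp
  have npos: "n > 0" using n3 r1 by simp
  have w0: "0 \<le> w x" "w x < n" for x using npos by (simp_all add: w_def)
  have wsuc: "w (x+1) = (w x + c) mod n" for x
    by (simp add: w_def distrib_left mod_add_left_eq)
  define d where "d = n - 2*c"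
  have d1: "d \<ge> 1" using c2 d_def by simp
  have step1: "w p + c > n - r \<and> w (p+1) = w p + c"
    if "r \<le> p" "p + 1 \<le> n - r" "w p < r" for p
  proof -
    have e: "w (p+1) = w p + c" unfolding wsuc using w0[of p] that c2 n3 cB
      by (intro mod_pos_pos_trivial) linarith+
    have "w (p+1) < r \<or> w (p+1) > n - r" using bad[of "p+1"] that by simp
    then show ?thesis using e w0[of p] cB n3 by linarith
  qed
  have step2: "w (p+2) = w p - d"
    if "r \<le> p" "p + 1 \<le> n - r" "w p < r" for p
  proof -
    have s: "w p + c > n - r" "w (p+1) = w p + c" using step1[OF that] by auto
    have "w (p+2) = (w (p+1) + c) mod n" using wsuc[of "p+1"] by (simp add: add.assoc)
    also have "\<dots> = (w p - d + n) mod n" using s(2) by (simp add: d_def add.commute)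
    also have "\<dots> = (w p - d) mod n" by simp
    also have "\<dots> = w p - d" using s(1) w0[of p] cB n3 d_def d1
      by (intro mod_pos_pos_trivial) linarith+
    finally show ?thesis .
  qed
  have big: "n - 2*r \<ge> 2" using cB c2 n3 by linarith
  obtain p0 where p0: "p0 = r \<or> p0 = r + 1" "w p0 < r"
  proof (cases "w r < r")
    case True then show ?thesis using that by blast
  next
    case False
    then have hi: "w r > n - r" using bad[of r] n3 r1 by linarith
    have "w (r+1) = (w r + c) mod n" by (rule wsuc)
    also have "\<dots> = w r + c - n"
    proof -
      have "(w r + c) mod n = (w r + c - n) mod n" by (simp add: minus_mod_self2)
      also have "\<dots> = w r + c - n" using hi w0[of r] c2 cB n3
        by (intro mod_pos_pos_trivial) linarith+
      finally show ?thesis .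
    qed
    finally have "w (r+1) < r" using w0[of r] c2 cB n3 bad[of "r+1"] big by linarith
    then show ?thesis using that by blast
  qed
  have ind: "w (p0 + 2*int k) = w p0 - d * int k" if "p0 + 2*int k + 1 \<le> n - r" for k :: nat
    using that
  proof (induction k)
    case 0 then show ?case by simp
  next
    case (Suc k)
    have IH: "w (p0 + 2*int k) = w p0 - d * int k" using Suc by simp
    have lt: "w (p0 + 2*int k) < r" using IH p0(2) d1
      by (smt (verit) mult_nonneg_nonneg of_nat_0_le_iff)
    have "w (p0 + 2*int k + 2) = w (p0 + 2*int k) - d"
      using step2[of "p0 + 2*int k"] lt Suc.prems p0(1) by auto
    then show ?case using IH by (simp add: algebra_simps)
  qed
  define K where "K = nat ((n - r - 1 - p0) div 2)"
  have K1: "p0 + 2*int K + 1 \<le> n - r" "2*int K \<ge> n - 2*r - 3"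
    using p0(1) big unfolding K_def by auto
  have e: "w (p0 + 2*int K) = w p0 - d * int K" using ind K1 by simp
  have "w (p0 + 2*int K) + c > n - r"
    using step1[of "p0 + 2*int K"] K1 e p0 d1 r1
    by (smt (verit) mult_nonneg_nonneg of_nat_0_le_iff)
  moreover have "d * int K \<ge> int K" using mult_right_mono[OF d1, of "int K"] by simp
  ultimately show False using e p0(2) K1 d_def n3 c2 by linarith
qed

lemma core:
  fixes n c r :: int
  assumes r: "r = n div 3" and n1: "1 \<le> n" and c1: "1 \<le> c" and c2: "2*c \<le> n"
  shows "\<exists>x. r \<le> x \<and> x \<le> n - r \<and> r \<le> (c*x) mod n \<and> (c*x) mod n \<le> n - r"
proof -
  have n3: "3*r \<le> n" "n < 3*r + 3" using r by simp_all
  consider "r = 0" | "r \<ge> 1 \<and> c \<le> n - 2*r + 1" | "r \<ge> 1 \<and> c \<ge> n - 2*r + 2 \<and> 2*c < n"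
    | "r \<ge> 1 \<and> c \<ge> n - 2*r + 2 \<and> 2*c = n"
    using r c2 n1 by (cases "r = 0") (auto, linarith)
  then show ?thesis
  proof cases
    case 1 then show ?thesis using n1 by (intro exI[of _ 0]) simp
  next
    case 2 then show ?thesis using caseA r c1 by blast
  next
    case 3 then show ?thesis using caseB r by blast
  next
    case 4
    obtain x where x: "x = r \<or> x = r + 1" "odd x" proof (cases "even r")
      case True then show ?thesis using that[of "r+1"] by simp
    next
      case False then show ?thesis using that[of r] by simp
    qed
    then obtain t where t: "x = 2*t + 1" by (meson oddE)
    have "c * x = n * t + c" using 4 t by (simp add: algebra_simps)
    then have "(c*x) mod n = c" using 4 c1 by (simp add: mod_pos_pos_trivial)
    then show ?thesis using x 4 n3 by (intro exI[of _ x]) auto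
  qed
qed

lemma L1:
  fixes n c r :: int
  assumes r: "r = n div 3" and n1: "1 \<le> n" and nd: "\<not> n dvd c"
  shows "\<exists>x. r \<le> x \<and> x \<le> n - r \<and> r \<le> (c*x) mod n \<and> (c*x) mod n \<le> n - r"
proof -
  define c0 where "c0 = c mod n"
  have c0: "1 \<le> c0" "c0 < n" using nd n1 unfolding c0_def
    by (simp_all add: dvd_eq_mod_eq_0) (smt (verit) pos_mod_sign)
  have eq: "(c*x) mod n = (c0*x) mod n" for x by (simp add: c0_def mod_mult_left_eq)
  show ?thesis
  proof (cases "2*c0 \<le> n")
    case True then show ?thesis using core[OF r n1 c0(1) True] eq by simp
  next
    case False
    obtain x where x: "r \<le> x" "x \<le> n - r" "r \<le> ((n - c0)*x) mod n" "((n - c0)*x) mod n \<le> n - r"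
      using core[OF r n1, of "n - c0"] False c0 by auto
    have "(c0 * x) mod n = (- ((n - c0)*x)) mod n"
    proof -
      have "c0 * x = - ((n - c0)*x) + x * n" by (simp add: algebra_simps)
      then show ?thesis by (metis mod_mult_self1)
    qed
    then show ?thesis using sym_I[of n r "(n - c0)*x"] x n1 eq by auto
  qed
qed

lemma dist_nonneg: "dist_nint x \<ge> 0"
  unfolding dist_nint_def by (simp add: ceiling_correct)

lemma dist_le1: "dist_nint x \<le> 1"
proof -
  have "x - of_int \<lfloor>x\<rfloor> < 1" by linarith
  then show ?thesis unfolding dist_nint_def by linarith
qed

lemma dist_int: "dist_nint (real_of_int k) = 0"
  unfolding dist_nint_def by simp

lemma dist_ge:
  fixes n r k :: int
  assumes n: "n > 0" and r0: "0 \<le> r" and a: "r \<le> k mod n" "k mod n \<le> n - r"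
  shows "dist_nint (real_of_int k / real_of_int n) \<ge> real_of_int r / real_of_int n"
proof -
  define q where "q = k div n"
  define \<rho> where "\<rho> = k mod n"
  have k: "k = q*n + \<rho>" by (simp add: q_def \<rho>_def)
  have \<rho>: "0 \<le> \<rho>" "\<rho> < n" using n by (simp_all add: \<rho>_def)
  have x: "real_of_int k / real_of_int n = real_of_int q + real_of_int \<rho> / real_of_int n"
    using n by (simp add: k field_simps)
  have fl: "\<lfloor>real_of_int k / real_of_int n\<rfloor> = q"
    unfolding x using \<rho> n by (simp add: floor_divide_of_int_eq div_pos_pos_trivial)
  have "real_of_int k / real_of_int n - real_of_int \<lfloor>real_of_int k / real_of_int n\<rfloor>
      = real_of_int \<rho> / real_of_int n" using x fl by simp
  moreover have "real_of_int r / real_of_int n \<le> real_of_int \<rho> / real_of_int n"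
    using a n by (simp add: \<rho>_def divide_right_mono)
  moreover have "real_of_int r / real_of_int n \<le>
      real_of_int \<lceil>real_of_int k / real_of_int n\<rceil> - real_of_int k / real_of_int n"
  proof (cases "\<rho> = 0")
    case True
    then have "r = 0" using a r0 by (simp add: \<rho>_def)
    then show ?thesis by (simp add: ceiling_correct)
  next
    case False
    have ce: "\<lceil>real_of_int k / real_of_int n\<rceil> = q + 1"
      unfolding x using \<rho> n False by (intro ceiling_unique) (auto simp: field_simps)
    have "real_of_int \<lceil>real_of_int k / real_of_int n\<rceil> - real_of_int k / real_of_int n
       = 1 - real_of_int \<rho> / real_of_int n" using ce x by simp
    also have "\<dots> = real_of_int (n - \<rho>) / real_of_int n" using n by (simp add: field_simps)
    moreover have "real_of_int r / real_of_int n \<le> real_of_int (n - \<rho>) / real_of_int n"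
      using a n by (intro divide_right_mono) (auto simp: \<rho>_def)
    ultimately show ?thesis by simp
  qed
  ultimately show ?thesis unfolding dist_nint_def by simp
qed

lemma pairlem:
  fixes a b n r :: int
  assumes r: "r = n div 3" and n1: "1 \<le> n" and g: "gcd a n = 1" and nd: "\<not> n dvd b"
  shows "\<exists>m. r \<le> (m*a) mod n \<and> (m*a) mod n \<le> n - r \<and> r \<le> (m*b) mod n \<and> (m*b) mod n \<le> n - r"
proof -
  obtain u v where uv: "u*a + v*n = 1" using bezout_int[of a n] g by auto
  have nd2: "\<not> n dvd (u*b)"
  proof
    assume "n dvd u*b"
    then have "n dvd (u*a)*b" by (metis dvd_mult mult.commute mult.left_commute)
    moreover have "(u*a)*b = b - n*(v*b)"
    proof -
      have e: "u*a = 1 - v*n" using uv by simp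
      have "(u*a)*b = (1 - v*n)*b" by (simp only: e)
      then show ?thesis by (simp add: algebra_simps)
    qed
    ultimately have "n dvd b - n*(v*b)" by simp
    moreover have "n dvd n*(v*b)" by simp
    ultimately have "n dvd (b - n*(v*b)) + n*(v*b)" by (rule dvd_add)
    then show False using nd by simp
  qed
  obtain x where x: "r \<le> x" "x \<le> n - r" "r \<le> ((u*b)*x) mod n" "((u*b)*x) mod n \<le> n - r"
    using L1[OF r n1 nd2] by auto
  have n3: "3*r \<le> n" using r by simp
  have r0: "0 \<le> r" using r n1 by simp
  have ma: "(u*x)*a = x + (-(x*v))*n"
  proof -
    have "u*a = 1 - v*n" using uv by simp
    then have "(u*x)*a = x*(1 - v*n)" by (metis mult.commute mult.left_commute)
    then show ?thesis by (simp add: algebra_simps)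
  qed
  have ea: "(u*x*a) mod n = x mod n" unfolding ma by (rule mod_mult_self1)
  have xr: "r \<le> x mod n \<and> x mod n \<le> n - r"
  proof (cases "r = 0")
    case True
    have "x mod n < n" "0 \<le> x mod n" using n1 by simp_all
    then show ?thesis using True by linarith
  next
    case False then have "x < n" using x r0 by linarith
    then show ?thesis using x r0 by (simp add: mod_pos_pos_trivial)
  qed
  have eqb: "u*x*b = (u*b)*x" by (simp only: ac_simps)
  have A: "r \<le> (u*x*a) mod n \<and> (u*x*a) mod n \<le> n - r" unfolding ea by (rule xr)
  have B: "r \<le> (u*x*b) mod n \<and> (u*x*b) mod n \<le> n - r" unfolding eqb using x by blast
  show ?thesis using A B by (intro exI[of _ "u*x"] conjI) simp_all
qed

lemma trick:
  fixes v1 v2 v3 :: nat and N r :: int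
  assumes N: "N = int v1 + int v2" and r: "r = N div 3" and pos: "v1 > 0" "v2 > 0"
    and gcd3: "gcd v1 (gcd v2 v3) = 1" and g12: "gcd v1 v2 = 2"
    and d2: "gcd (int v3) N \<noteq> 1"
  shows "\<exists>m. r \<le> (m * int v1) mod N \<and> (m * int v1) mod N \<le> N - r \<and>
             r \<le> (m * int v3) mod N \<and> (m * int v3) mod N \<le> N - r"
proof -
  define a where "a = int v1"
  define b where "b = int v3"
  have Npos: "N > 0" using N pos by simp
  have n3: "3*r \<le> N" using r by simp
  have "2 dvd v1" "2 dvd v2" using g12 by (metis gcd_dvd1 gcd_dvd2)+
  then obtain a2 h2 where a2: "v1 = 2*a2" and h2: "v2 = 2*h2" by (auto elim!: dvdE)
  have oddb: "odd v3"
  proof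
    assume "even v3"
    then have "2 dvd gcd v1 (gcd v2 v3)" using \<open>2 dvd v1\<close> \<open>2 dvd v2\<close> by simp
    then show False using gcd3 by simp
  qed
  then obtain b3 where b3: "v3 = 2*b3 + 1" by (metis oddE)
  define h where "h = int a2 + int h2"
  have Nh: "N = 2*h" using N a2 h2 h_def by simp
  define d where "d = gcd b N"
  have dpos: "d > 0" using Npos by (simp add: d_def)
  have d2': "d \<ge> 2" using d2 dpos unfolding d_def b_def by linarith
  have "d dvd N" by (simp add: d_def)
  then obtain e where e: "N = d*e" by (auto elim!: dvdE)
  have epos: "e > 0" using e Npos dpos by (simp add: zero_less_mult_iff)
  have "d dvd b" by (simp add: d_def)
  then obtain b2 where b2: "b = d*b2" by (auto elim!: dvdE)
  have cop: "gcd a d = 1"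
  proof -
    have "gcd a d dvd a" "gcd a d dvd b" "gcd a d dvd N"
      using \<open>d dvd b\<close> \<open>d dvd N\<close> by (auto intro: dvd_trans)
    then have "gcd a d dvd N - a" by simp
    then have "gcd a d dvd int v2" using N a_def by simp
    then have "gcd a d dvd gcd a (gcd (int v2) b)"
      using \<open>gcd a d dvd a\<close> \<open>gcd a d dvd b\<close> by simp
    also have "gcd a (gcd (int v2) b) = 1" using gcd3 unfolding a_def b_def
      by (metis gcd_int_int_eq of_nat_1)
    finally have "is_unit (gcd a d)" .
    then show ?thesis by (simp add: is_unit_gcd coprime_imp_gcd_eq_1)
  qed
  obtain u v where uv: "u*a + v*d = 1" using bezout_int[of a d] cop by auto
  define k where "k = d div 2"
  have k: "2*k \<le> d" "d \<le> 3*k" "k \<ge> 1" using d2' by (simp_all add: k_def)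
  define m where "m = h + e*(u*k)"
  have ma: "m*a = e*k + (int a2 - v*k)*N"
  proof -
    have ua: "u*a = 1 - v*d" using uv by simp
    have "m*a = h*a + (e*k)*(u*a)" by (simp add: m_def algebra_simps)
    also have "\<dots> = h*(2*int a2) + (e*k)*(1 - v*d)" by (subst ua) (simp add: a_def a2)
    also have "\<dots> = (2*h)*int a2 + e*k - v*k*(d*e)" by (simp add: algebra_simps)
    also have "\<dots> = N*int a2 + e*k - v*k*N" by (simp only: Nh[symmetric] e[symmetric])
    finally show ?thesis by (simp add: algebra_simps)
  qed
  have mb: "m*b = h + (int b3 + u*k*b2)*N"
  proof -
    have "m*b = h*b + (u*k)*(e*b)" by (simp add: m_def algebra_simps)
    also have "\<dots> = h*(2*int b3 + 1) + (u*k)*((d*e)*b2)"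
      using b2 by (simp add: b_def b3 algebra_simps)
    also have "\<dots> = h + (2*h)*int b3 + (u*k)*(N*b2)" by (simp add: e algebra_simps)
    also have "\<dots> = h + N*int b3 + (u*k)*(N*b2)" by (simp only: Nh[symmetric])
    finally show ?thesis by (simp add: algebra_simps)
  qed
  have ek: "2*(e*k) \<le> N" "N \<le> 3*(e*k)" "e*k \<ge> 1"
  proof -
    have "e*(2*k) \<le> e*d" using k epos by (intro mult_left_mono) auto
    then show "2*(e*k) \<le> N" using e by (simp add: algebra_simps)
    have "e*d \<le> e*(3*k)" using k epos by (intro mult_left_mono) auto
    then show "N \<le> 3*(e*k)" using e by (simp add: algebra_simps)
    have "e \<le> e*k" using mult_left_mono[of 1 k e] k epos by simp
    then show "e*k \<ge> 1" using epos by linarith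
  qed
  have A: "(m*a) mod N = e*k" unfolding ma mod_mult_self1 using ek
    by (intro mod_pos_pos_trivial) linarith+
  have B: "(m*b) mod N = h" unfolding mb mod_mult_self1 using Nh Npos
    by (intro mod_pos_pos_trivial) linarith+
  show ?thesis using A B ek n3 Nh unfolding a_def b_def
    by (intro exI[of _ m]) linarith
qed

theorem lemma7p1:
  fixes v1 v2 v3 :: nat and r :: nat and L :: real
  assumes pos: "v1 > 0" "v2 > 0" "v3 > 0"
    and gcd3: "gcd v1 (gcd v2 v3) = 1"
    and g12: "gcd v1 v2 \<le> 2" and g13: "gcd v1 v3 \<le> 2" and g23: "gcd v2 v3 \<le> 2"
    and r_def: "r = (v1 + v2) div 3"
    and L_def: "L = (SUP m::int. loneliness3 v1 v2 v3 (real_of_int m / real (v1 + v2)))"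
  shows "((v1 + v2) dvd v3 \<longrightarrow> L = 0) \<and>
         (\<not> (v1 + v2) dvd v3 \<longrightarrow> L \<ge> real r / real (v1 + v2))"
proof -
  define N where "N = int v1 + int v2"
  have Npos: "N > 0" using pos by (simp add: N_def)
  have rN: "int r = N div 3" using r_def by (simp add: N_def zdiv_int)
  have realN: "real (v1 + v2) = real_of_int N" by (simp add: N_def)
  have tv: "real_of_int m / real (v1 + v2) * real v = real_of_int (m * int v) / real_of_int N"
    for m :: int and v :: nat by (simp add: N_def)
  define f where "f m = loneliness3 v1 v2 v3 (real_of_int m / real (v1 + v2))" for m :: int
  have Lf: "L = (SUP m. f m)" by (simp add: L_def f_def)
  have fle: "f m \<le> 1" for m unfolding f_def loneliness3_def using dist_le1 by (meson min.coboundedI1)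
  have bdd: "bdd_above (range f)" using fle by (intro bdd_aboveI[of _ 1]) auto
  have part1: "L = 0" if dv: "(v1 + v2) dvd v3"
  proof -
    obtain q where q: "v3 = (v1 + v2) * q" using dv by (auto elim!: dvdE)
    have "f m = 0" for m
    proof -
      have "real_of_int m / real (v1 + v2) * real v3 = real_of_int (m * int q)"
        using pos by (simp add: q field_simps)
      then have "dist_nint (real_of_int m / real (v1 + v2) * real v3) = 0" using dist_int[of "m * int q"] by (simp only:)
      then have "f m = min (dist_nint (real_of_int m / real (v1 + v2) * real v1))
          (min (dist_nint (real_of_int m / real (v1 + v2) * real v2)) 0)"
        unfolding f_def loneliness3_def by (simp only:)
      moreover have "min x (min y 0) = (0::real)" if "x \<ge> 0" "y \<ge> 0" for x y
        using that by simp
      ultimately show ?thesis using dist_nonneg by presburger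
    qed
    then show ?thesis unfolding Lf by simp
  qed
  have part2: "L \<ge> real r / real (v1 + v2)" if ndv: "\<not> (v1 + v2) dvd v3"
  proof -
    define a where "a = int v1"
    define b where "b = int v3"
    have NN: "N = int (v1 + v2)" by (simp add: N_def)
    have nb: "\<not> N dvd b" using ndv unfolding NN b_def by (simp only: of_nat_dvd_iff) simp
    have na: "\<not> N dvd a"
    proof
      assume "N dvd a"
      then have "N \<le> a" using pos by (intro zdvd_imp_le) (auto simp: a_def)
      then show False using pos by (simp add: N_def a_def)
    qed
    have gaN: "gcd a N = int (gcd v1 v2)" unfolding a_def NN
      by (simp only: gcd_int_int_eq gcd_add2)
    have gbN: "gcd b N = int (gcd v3 (v1 + v2))" unfolding b_def NN
      by (simp only: gcd_int_int_eq)
    have N1: "1 \<le> N" using Npos by simp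
    have "\<exists>m. int r \<le> (m*a) mod N \<and> (m*a) mod N \<le> N - int r \<and>
              int r \<le> (m*b) mod N \<and> (m*b) mod N \<le> N - int r"
    proof (cases "gcd v1 v2 = 1")
      case True
      then show ?thesis using pairlem[OF rN N1 _ nb] gaN by simp
    next
      case c2: False
      show ?thesis
      proof (cases "gcd v3 (v1 + v2) = 1")
        case True
        then have "gcd b N = 1" using gbN by simp
        then obtain m where "int r \<le> (m*b) mod N \<and> (m*b) mod N \<le> N - int r \<and>
              int r \<le> (m*a) mod N \<and> (m*a) mod N \<le> N - int r"
          using pairlem[OF rN N1 \<open>gcd b N = 1\<close> na] by blast
        then show ?thesis by blast
      next
        case False
        have "gcd v1 v2 > 0" using pos by simp
        then have "gcd v1 v2 = 2" using c2 g12 by linarith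
        moreover have "gcd (int v3) N \<noteq> 1" using False gbN b_def by simp
        ultimately show ?thesis using trick[OF N_def rN pos(1,2) gcd3] a_def b_def by simp
      qed
    qed
    then obtain m where m: "int r \<le> (m*a) mod N" "(m*a) mod N \<le> N - int r"
        "int r \<le> (m*b) mod N" "(m*b) mod N \<le> N - int r" by blast
    have mv2: "(m * int v2) mod N = (-(m*a)) mod N"
    proof -
      have "m * int v2 = -(m*a) + m*N" by (simp add: N_def a_def algebra_simps)
      then show ?thesis by (metis mod_mult_self1 mult.commute)
    qed
    have m2: "int r \<le> (m * int v2) mod N" "(m * int v2) mod N \<le> N - int r"
      using sym_I[OF Npos m(1,2)] mv2 by simp_all
    have r0: "0 \<le> int r" by simp
    have d1: "real_of_int (int r) / real_of_int N \<le> dist_nint (real_of_int (m * int v1) / real_of_int N)"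
      using dist_ge[OF Npos r0, of "m * int v1"] m(1,2) unfolding a_def by blast
    have d2: "real_of_int (int r) / real_of_int N \<le> dist_nint (real_of_int (m * int v2) / real_of_int N)"
      using dist_ge[OF Npos r0, of "m * int v2"] m2 by blast
    have d3: "real_of_int (int r) / real_of_int N \<le> dist_nint (real_of_int (m * int v3) / real_of_int N)"
      using dist_ge[OF Npos r0, of "m * int v3"] m(3,4) unfolding b_def by blast
    have "real r / real (v1 + v2) \<le> f m"
      unfolding f_def loneliness3_def tv realN using d1 d2 d3 by simp
    also have "f m \<le> L" unfolding Lf using bdd by (intro cSUP_upper) auto
    finally show ?thesis .
  qed
  show ?thesis using part1 part2 by blast
qed

end
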